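(* Let $\mathcal{D}$ be an admissible set of domains on a topological space $X$. Then the partially ordered commutative ring $\mathscr{C}_\approx(\mathcal{D})$ is strongly localizable.
   Context: An admissible set of domains on $X$ is a set $\mathcal{D}$ of open subsets of $X$ with $X\in\mathcal{D}$ and $A\cap B\in\mathcal{D}$ for all $A,B\in\mathcal{D}$. On $\bigcup_{A\in\mathcal{D}}\mathscr{C}(A)$ ($\mathscr{C}(A)$ = continuous real-valued functions on $A$) define $f+g$ and $fg$ pointwise on $\operatorname{dom}f\cap\operatorname{dom}g$; $f\approx g$ iff there is $A\in\mathcal{D}$ with $A\subseteq\operatorname{dom}f\cap\operatorname{dom}g$ and $f|_A=g|_A$. $\mathscr{C}_\approx(\mathcal{D})$ is the quotient commutative ring, with order $[f]\le[g]$ iff there is $A\in\mathcal{D}$, $A\subseteq\operatorname{dom}f\cap\operatorname{dom}g$, with $f|_A\le g|_A$ pointwise. For a commutative ring $R$ with translation-invariant partial order and positive cone $R^+$: $\mathrm{Loc}(R)$ is the set of $s\in1+R^+$ such that $rs\in R^+$ implies $r\in R^+$ for all $r\in R$; $R$ is strongly localizable if $r^2\in R^+$ for all $r$ and $\mathrm{Loc}(R)=1+R^+$. *)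

theory Defs
  imports "HOL-Analysis.Analysis"
begin

record 'r po_ring =
  pr_carrier :: "'r set"
  pr_add :: "'r \<Rightarrow> 'r \<Rightarrow> 'r"
  pr_mult :: "'r \<Rightarrow> 'r \<Rightarrow> 'r"
  pr_zero :: "'r"
  pr_one :: "'r"
  pr_le :: "'r \<Rightarrow> 'r \<Rightarrow> bool"

definition pos_cone :: "'r po_ring \<Rightarrow> 'r set" where
  "pos_cone R = {r \<in> pr_carrier R. pr_le R (pr_zero R) r}"

definition one_plus_pos :: "'r po_ring \<Rightarrow> 'r set" where
  "one_plus_pos R = {pr_add R (pr_one R) p | p. p \<in> pos_cone R}"

definition Loc :: "'r po_ring \<Rightarrow> 'r set" where
  "Loc R = {s \<in> one_plus_pos R.
     \<forall>r \<in> pr_carrier R. pr_mult R r s \<in> pos_cone R \<longrightarrow> r \<in> pos_cone R}"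

definition strongly_localizable :: "'r po_ring \<Rightarrow> bool" where
  "strongly_localizable R \<longleftrightarrow>
     (\<forall>r \<in> pr_carrier R. pr_mult R r r \<in> pos_cone R) \<and> Loc R = one_plus_pos R"

definition admissible_domains :: "'a topology \<Rightarrow> 'a set set \<Rightarrow> bool" where
  "admissible_domains X D \<longleftrightarrow>
     (\<forall>A \<in> D. openin X A) \<and> topspace X \<in> D \<and> (\<forall>A \<in> D. \<forall>B \<in> D. A \<inter> B \<in> D)"

text \<open>A partial function is represented by its domain together with a function
  (whose values outside the domain are irrelevant).\<close>

definition CD_funs :: "'a topology \<Rightarrow> 'a set set \<Rightarrow> ('a set \<times> ('a \<Rightarrow> real)) set" where
  "CD_funs X D = {(A, f). A \<in> D \<and> continuous_map (subtopology X A) euclideanreal f}"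

definition CD_rel :: "'a topology \<Rightarrow> 'a set set
    \<Rightarrow> (('a set \<times> ('a \<Rightarrow> real)) \<times> ('a set \<times> ('a \<Rightarrow> real))) set" where
  "CD_rel X D = {((A, f), (B, g)). (A, f) \<in> CD_funs X D \<and> (B, g) \<in> CD_funs X D \<and>
      (\<exists>C \<in> D. C \<subseteq> A \<inter> B \<and> (\<forall>x \<in> C. f x = g x))}"

definition fadd :: "'a set \<times> ('a \<Rightarrow> real) \<Rightarrow> 'a set \<times> ('a \<Rightarrow> real) \<Rightarrow> 'a set \<times> ('a \<Rightarrow> real)" where
  "fadd p q = (fst p \<inter> fst q, \<lambda>x. snd p x + snd q x)"

definition fmult :: "'a set \<times> ('a \<Rightarrow> real) \<Rightarrow> 'a set \<times> ('a \<Rightarrow> real) \<Rightarrow> 'a set \<times> ('a \<Rightarrow> real)" where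
  "fmult p q = (fst p \<inter> fst q, \<lambda>x. snd p x * snd q x)"

definition C_approx :: "'a topology \<Rightarrow> 'a set set \<Rightarrow> ('a set \<times> ('a \<Rightarrow> real)) set po_ring" where
  "C_approx X D =
    \<lparr> pr_carrier = CD_funs X D // CD_rel X D,
      pr_add = (\<lambda>c d. \<Union>p \<in> c. \<Union>q \<in> d. CD_rel X D `` {fadd p q}),
      pr_mult = (\<lambda>c d. \<Union>p \<in> c. \<Union>q \<in> d. CD_rel X D `` {fmult p q}),
      pr_zero = CD_rel X D `` {(topspace X, \<lambda>_. 0)},
      pr_one = CD_rel X D `` {(topspace X, \<lambda>_. 1)},
      pr_le = (\<lambda>c d. \<exists>p \<in> c. \<exists>q \<in> d. \<exists>C \<in> D. C \<subseteq> fst p \<inter> fst q \<and>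
                  (\<forall>x \<in> C. snd p x \<le> snd q x)) \<rparr>"

end

theory Submission
  imports Defs
begin

lemma CD_rel_iff:
  "(p, q) \<in> CD_rel X D \<longleftrightarrow> p \<in> CD_funs X D \<and> q \<in> CD_funs X D \<and>
     (\<exists>C \<in> D. C \<subseteq> fst p \<inter> fst q \<and> (\<forall>x \<in> C. snd p x = snd q x))"
  by (cases p; cases q) (auto simp: CD_rel_def)

lemma CD_funs_iff:
  "p \<in> CD_funs X D \<longleftrightarrow> fst p \<in> D \<and> continuous_map (subtopology X (fst p)) euclideanreal (snd p)"
  by (cases p) (auto simp: CD_funs_def)

lemma CD_equiv:
  assumes "admissible_domains X D"
  shows "equiv (CD_funs X D) (CD_rel X D)"
proof (rule equivI)
  show "refl_on (CD_funs X D) (CD_rel X D)"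
    unfolding refl_on_def by (auto simp: CD_rel_iff CD_funs_iff)
  show "sym (CD_rel X D)"
    unfolding sym_def CD_rel_iff by (metis Int_commute)
  show "trans (CD_rel X D)"
    unfolding trans_def
  proof (intro allI impI)
    fix p q r assume a1: "(p, q) \<in> CD_rel X D" and a2: "(q, r) \<in> CD_rel X D"
    have a: "(p, q) \<in> CD_rel X D \<and> (q, r) \<in> CD_rel X D" using a1 a2 by simp
    then obtain C1 C2 where "C1 \<in> D" "C1 \<subseteq> fst p \<inter> fst q" "\<forall>x\<in>C1. snd p x = snd q x"
      "C2 \<in> D" "C2 \<subseteq> fst q \<inter> fst r" "\<forall>x\<in>C2. snd q x = snd r x"
      by (auto simp: CD_rel_iff)
    moreover have "C1 \<inter> C2 \<in> D" using assms calculation unfolding admissible_domains_def by blast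
    ultimately show "(p, r) \<in> CD_rel X D" using a unfolding CD_rel_iff
      by (intro conjI bexI[of _ "C1 \<inter> C2"]) auto
  qed
  show "CD_rel X D \<subseteq> CD_funs X D \<times> CD_funs X D" by (auto simp: CD_rel_def)
qed

lemma fmult_in:
  assumes "admissible_domains X D" "p \<in> CD_funs X D" "q \<in> CD_funs X D"
  shows "fmult p q \<in> CD_funs X D"
proof -
  have "fst p \<inter> fst q \<in> D" using assms unfolding admissible_domains_def CD_funs_iff by blast
  moreover have "continuous_map (subtopology X (fst p \<inter> fst q)) euclideanreal (snd p)"
    using assms(2) unfolding CD_funs_iff
    by (meson continuous_map_from_subtopology_mono inf_le1)
  moreover have "continuous_map (subtopology X (fst p \<inter> fst q)) euclideanreal (snd q)"
    using assms(3) unfolding CD_funs_iff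
    by (meson continuous_map_from_subtopology_mono inf_le2)
  ultimately show ?thesis unfolding CD_funs_iff fmult_def
    by (auto intro: continuous_map_real_mult)
qed

lemma dom_sub:
  assumes "admissible_domains X D" "C \<in> D"
  shows "C \<subseteq> topspace X"
  using assms unfolding admissible_domains_def by (meson openin_subset)

lemma top_const_in:
  assumes "admissible_domains X D"
  shows "(topspace X, \<lambda>_. c) \<in> CD_funs X D"
  using assms unfolding admissible_domains_def CD_funs_def by auto

lemma in_class_rel:
  assumes "admissible_domains X D" "c \<in> CD_funs X D // CD_rel X D" "p \<in> c" "q \<in> c"
  shows "(p, q) \<in> CD_rel X D"
  using assms CD_equiv by (metis quotient_eq_iff)

lemma le_unfold: "pr_le (C_approx X D) c d \<longleftrightarrow> (\<exists>p \<in> c. \<exists>q \<in> d. \<exists>C \<in> D. C \<subseteq> fst p \<inter> fst q \<and>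
                  (\<forall>x \<in> C. snd p x \<le> snd q x))"
  by (simp add: C_approx_def)

lemma zero_eq: "pr_zero (C_approx X D) = CD_rel X D `` {(topspace X, \<lambda>_. 0)}"
  by (simp add: C_approx_def)

lemma one_eq: "pr_one (C_approx X D) = CD_rel X D `` {(topspace X, \<lambda>_. 1)}"
  by (simp add: C_approx_def)

lemma mult_mem: "w \<in> pr_mult (C_approx X D) r s \<longleftrightarrow> (\<exists>p\<in>r. \<exists>q\<in>s. (fmult p q, w) \<in> CD_rel X D)"
  by (simp add: C_approx_def)

lemma add_mem: "w \<in> pr_add (C_approx X D) r s \<longleftrightarrow> (\<exists>p\<in>r. \<exists>q\<in>s. (fadd p q, w) \<in> CD_rel X D)"
  by (simp add: C_approx_def)

lemma carrier_eq: "pr_carrier (C_approx X D) = CD_funs X D // CD_rel X D"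
  by (simp add: C_approx_def)

theorem proposition10:
  fixes X :: "'a topology" and D :: "'a set set"
  assumes "admissible_domains X D"
  shows "strongly_localizable (C_approx X D)"
proof -
  let ?R = "CD_rel X D" and ?F = "CD_funs X D"
  have eqv: "equiv ?F ?R" using CD_equiv[OF assms] .
  have Dint: "\<And>A B. A \<in> D \<Longrightarrow> B \<in> D \<Longrightarrow> A \<inter> B \<in> D"
    using assms unfolding admissible_domains_def by blast
  have topD: "topspace X \<in> D" using assms unfolding admissible_domains_def by blast
  have zero_in: "(topspace X, \<lambda>_. 0) \<in> ?R `` {(topspace X, \<lambda>_. 0)}"
    using eqv top_const_in[OF assms] by (meson Image_singleton_iff equiv_def refl_onD)
  have part1: "pr_mult (C_approx X D) r r \<in> pos_cone (C_approx X D)"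
    if r: "r \<in> pr_carrier (C_approx X D)" for r
  proof -
    from r obtain a where a: "a \<in> ?F" "r = ?R `` {a}"
      by (auto simp: C_approx_def quotient_def)
    have fa: "fmult a a \<in> ?F" using fmult_in[OF assms a(1) a(1)] .
    have ar: "a \<in> r" using a eqv by (meson Image_singleton_iff equiv_def refl_onD)
    have eq: "pr_mult (C_approx X D) r r = ?R `` {fmult a a}"
    proof
      show "?R `` {fmult a a} \<subseteq> pr_mult (C_approx X D) r r"
      proof
        fix w assume "w \<in> ?R `` {fmult a a}"
        then show "w \<in> pr_mult (C_approx X D) r r" using ar unfolding C_approx_def by simp blast
      qed
      show "pr_mult (C_approx X D) r r \<subseteq> ?R `` {fmult a a}"
      proof
        fix w assume "w \<in> pr_mult (C_approx X D) r r"
        then obtain p q where pq: "p \<in> r" "q \<in> r" "(fmult p q, w) \<in> ?R"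
          by (auto simp: C_approx_def)
        have "(a, p) \<in> ?R" "(a, q) \<in> ?R" using pq a by auto
        then obtain C1 C2 where C: "C1 \<in> D" "C1 \<subseteq> fst a \<inter> fst p" "\<forall>x\<in>C1. snd a x = snd p x"
          "C2 \<in> D" "C2 \<subseteq> fst a \<inter> fst q" "\<forall>x\<in>C2. snd a x = snd q x" and pF: "p \<in> ?F" "q \<in> ?F"
          by (auto simp: CD_rel_iff)
        have "(fmult a a, fmult p q) \<in> ?R"
          unfolding CD_rel_iff
          using fa fmult_in[OF assms pF] Dint[OF C(1) C(4)] C
          by (intro conjI bexI[of _ "C1 \<inter> C2"]) (auto simp: fmult_def)
        with pq(3) eqv show "w \<in> ?R `` {fmult a a}"
          by (meson Image_singleton_iff equiv_def transD)
      qed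
    qed
    have carr: "?R `` {fmult a a} \<in> ?F // ?R" using fa by (rule quotientI)
    have self: "fmult a a \<in> ?R `` {fmult a a}" using fa eqv by (meson Image_singleton_iff equiv_def refl_onD)
    have "fst a \<in> D" using a(1) by (simp add: CD_funs_iff)
    then have le: "pr_le (C_approx X D) (pr_zero (C_approx X D)) (?R `` {fmult a a})"
      unfolding le_unfold zero_eq using zero_in self dom_sub[OF assms]
      by (intro bexI[OF _ zero_in] bexI[OF _ self] bexI[of _ "fst a"]) (auto simp: fmult_def)
    show ?thesis unfolding eq pos_cone_def using carr le by (simp add: C_approx_def)
  qed
  have part2: "r \<in> pos_cone (C_approx X D)"
    if s: "s \<in> one_plus_pos (C_approx X D)" and r: "r \<in> pr_carrier (C_approx X D)"
      and rs: "pr_mult (C_approx X D) r s \<in> pos_cone (C_approx X D)" for r s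
  proof -
    from s obtain p where sp: "s = pr_add (C_approx X D) (pr_one (C_approx X D)) p"
      and p: "p \<in> pos_cone (C_approx X D)" by (auto simp: one_plus_pos_def)
    from p obtain z q C where pc: "p \<in> ?F // ?R" and z: "z \<in> ?R `` {(topspace X, \<lambda>_. 0)}"
      and q: "q \<in> p" and C: "C \<in> D" "C \<subseteq> fst z \<inter> fst q" "\<forall>x\<in>C. snd z x \<le> snd q x"
      unfolding pos_cone_def carrier_eq le_unfold zero_eq by blast
    from rs obtain z2 w C2 where z2: "z2 \<in> ?R `` {(topspace X, \<lambda>_. 0)}"
      and w: "w \<in> pr_mult (C_approx X D) r s"
      and C2: "C2 \<in> D" "C2 \<subseteq> fst z2 \<inter> fst w" "\<forall>x\<in>C2. snd z2 x \<le> snd w x"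
      unfolding pos_cone_def carrier_eq le_unfold zero_eq by blast
    from w obtain r0 s0 where r0: "r0 \<in> r" and s0: "s0 \<in> s" and rw: "(fmult r0 s0, w) \<in> ?R"
      unfolding mult_mem by blast
    from rw obtain C3 where C3: "C3 \<in> D" "C3 \<subseteq> fst r0 \<inter> fst s0"
        "\<forall>x\<in>C3. snd r0 x * snd s0 x = snd w x"
      by (auto simp: CD_rel_iff fmult_def)
    from s0 sp have "s0 \<in> pr_add (C_approx X D) (pr_one (C_approx X D)) p" by simp
    then obtain ov q' where ov: "ov \<in> ?R `` {(topspace X, \<lambda>_. 1)}" and q': "q' \<in> p"
      and os: "(fadd ov q', s0) \<in> ?R" unfolding add_mem one_eq by blast
    from os obtain C4 where C4: "C4 \<in> D" "\<forall>x\<in>C4. snd ov x + snd q' x = snd s0 x"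
      by (auto simp: CD_rel_iff fadd_def)
    from ov obtain C5 where C5: "C5 \<in> D" "\<forall>x\<in>C5. snd ov x = 1"
      by (auto simp: CD_rel_iff)
    from z obtain C6 where C6: "C6 \<in> D" "\<forall>x\<in>C6. snd z x = 0"
      by (auto simp: CD_rel_iff)
    from z2 obtain C7 where C7: "C7 \<in> D" "\<forall>x\<in>C7. snd z2 x = 0"
      by (auto simp: CD_rel_iff)
    have "(q, q') \<in> ?R" using in_class_rel[OF assms pc q q'] .
    then obtain C8 where C8: "C8 \<in> D" "\<forall>x\<in>C8. snd q x = snd q' x"
      by (auto simp: CD_rel_iff)
    define E where "E = C \<inter> C2 \<inter> C3 \<inter> C4 \<inter> C5 \<inter> C6 \<inter> C7 \<inter> C8"
    have ED: "E \<in> D" unfolding E_def using Dint C(1) C2(1) C3(1) C4(1) C5(1) C6(1) C7(1) C8(1)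
      by presburger
    have Er: "E \<subseteq> fst r0" using C3 unfolding E_def by auto
    have pos: "snd r0 x \<ge> 0" if x: "x \<in> E" for x
    proof -
      have "0 \<le> snd q' x" using C(3) C6(2) C8(2) x unfolding E_def by force
      then have "snd s0 x \<ge> 1" using C4(2) C5(2) x unfolding E_def by force
      moreover have "snd r0 x * snd s0 x \<ge> 0" using C2(3) C3(3) C7(2) x unfolding E_def by force
      ultimately show ?thesis by (meson linorder_not_le mult_neg_pos order_less_le_trans zero_less_one)
    qed
    have "pr_le (C_approx X D) (pr_zero (C_approx X D)) r"
      unfolding le_unfold zero_eq using zero_in r0 ED Er pos dom_sub[OF assms ED]
      by (intro bexI[OF _ zero_in] bexI[OF _ r0] bexI[OF _ ED]) auto
    then show ?thesis using r by (simp add: pos_cone_def)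
  qed
  show ?thesis
    unfolding strongly_localizable_def Loc_def
    using part1 part2 by auto
qed

end
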